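(* Let $d$ be a symmetric nonnegative function on a set $\mathcal X$ with $d(x,z)\le M(d(x,y)+d(y,z))$ for all $x,y,z$. Let $\mathcal S\subset\mathcal X$ be finite and $\mathcal C_{\mathrm{OPT}}$ a set of $K$ centers minimizing $\sum_{x\in\mathcal S}\min_{c}d(x,c)^2$; its clusters are the classes of points of $\mathcal S$ with the same nearest optimal center. For a center set $\mathcal C$ and $Y\subseteq\mathcal S$ write $\Upsilon(Y)=\sum_{y\in Y}\min_{c\in\mathcal C}d(y,c)^2$ and $\Upsilon_{\mathrm{OPT}}(Y)=\sum_{y\in Y}\min_{c\in\mathcal C_{\mathrm{OPT}}}d(y,c)^2$. Let $\mathcal C$ be the current center set and $\Upsilon:=\Upsilon(\mathcal S)$. Choose $u>0$ uncovered clusters (clusters containing no point of $\mathcal C$), let $\mathcal S_u$ be the set of points in these clusters and $\mathcal S_c=\mathcal S\setminus\mathcal S_u$. Suppose $t\le u$ random centers are added to $\mathcal C$ one at a time, each chosen from $\mathcal S$ with probability proportional to $D(x)^2$, $D(x)$ being the distance from $x$ to the nearest current center. Let $\Upsilon'$ be the potential $\Upsilon(\mathcal S)$ for the new center set. Then $$\mathbb E[\Upsilon']\le\big(\Upsilon(\mathcal S_c)+16M^4\Upsilon_{\mathrm{OPT}}(\mathcal S_u)\big)(1+H_t)+\frac{u-t}{u}\Upsilon(\mathcal S_u),$$ where $H_t=1+\frac12+\dots+\frac1t$ (and $H_0=0$), and $\Upsilon(\mathcal S_c),\Upsilon(\mathcal S_u)$ refer to the current center set $\mathcal C$. *)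

theory Defs
  imports "HOL-Probability.Probability"
begin

definition distC :: "('a \<Rightarrow> 'a \<Rightarrow> real) \<Rightarrow> 'a set \<Rightarrow> 'a \<Rightarrow> real" where
  "distC d C x = Min ((\<lambda>c. d x c) ` C)"

definition cost :: "('a \<Rightarrow> 'a \<Rightarrow> real) \<Rightarrow> 'a set \<Rightarrow> 'a set \<Rightarrow> real" where
  "cost d C Y = (\<Sum>y\<in>Y. (distC d C y)^2)"

text \<open>Clusters of S w.r.t. the optimal centers Copt and a nearest-center assignment a:
  the (nonempty) classes of points of S with the same assigned optimal center.\<close>
definition clusters :: "'a set \<Rightarrow> 'a set \<Rightarrow> ('a \<Rightarrow> 'a) \<Rightarrow> 'a set set" where
  "clusters S Copt a = {A. (\<exists>c\<in>Copt. A = {x\<in>S. a x = c}) \<and> A \<noteq> {}}"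

definition sample_pmf :: "('a \<Rightarrow> 'a \<Rightarrow> real) \<Rightarrow> 'a set \<Rightarrow> 'a set \<Rightarrow> 'a pmf" where
  "sample_pmf d S C =
     embed_pmf (\<lambda>x. if x \<in> S then (distC d C x)^2 / cost d C S else 0)"

text \<open>If the current potential is 0 the sampling distribution is undefined; we then stop adding
  (the potential is 0 and stays 0 anyway).\<close>
fun kpp_pmf :: "('a \<Rightarrow> 'a \<Rightarrow> real) \<Rightarrow> 'a set \<Rightarrow> nat \<Rightarrow> 'a set \<Rightarrow> 'a set pmf" where
  "kpp_pmf d S 0 C = return_pmf C"
| "kpp_pmf d S (Suc t) C =
     (if cost d C S = 0 then return_pmf C
      else bind_pmf (sample_pmf d S C) (\<lambda>x. kpp_pmf d S t (insert x C)))"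

end

theory Submission imports Defs begin

lemma distC_le: "finite C \<Longrightarrow> c \<in> C \<Longrightarrow> distC d C x \<le> d x c"
  unfolding distC_def by (intro Min_le) auto

lemma distC_ex: "finite C \<Longrightarrow> C \<noteq> {} \<Longrightarrow> \<exists>c\<in>C. distC d C x = d x c"
proof -
  assume "finite C" "C \<noteq> {}"
  then have "Min ((\<lambda>c. d x c) ` C) \<in> (\<lambda>c. d x c) ` C" by (intro Min_in) auto
  then show ?thesis unfolding distC_def by auto
qed

lemma distC_nonneg: "\<forall>x y. 0 \<le> d x y \<Longrightarrow> finite C \<Longrightarrow> C \<noteq> {} \<Longrightarrow> 0 \<le> distC d C x"
  using distC_ex[of C d x] by auto

lemma distC_insert: "finite C \<Longrightarrow> C \<noteq> {} \<Longrightarrow> distC d (insert y C) x = min (d x y) (distC d C x)"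
  unfolding distC_def by (simp add: Min_insert)

lemma cost_nonneg: "0 \<le> cost d C Y"
  unfolding cost_def by (intro sum_nonneg) auto

lemma cost_insert_le: "\<forall>x y. 0 \<le> d x y \<Longrightarrow> finite C \<Longrightarrow> C \<noteq> {} \<Longrightarrow> cost d (insert z C) Y \<le> cost d C Y"
  unfolding cost_def
  by (intro sum_mono power_mono) (auto simp: distC_insert distC_nonneg)

lemma cost_union: "finite A \<Longrightarrow> finite B \<Longrightarrow> A \<inter> B = {} \<Longrightarrow> cost d C (A \<union> B) = cost d C A + cost d C B"
  unfolding cost_def by (rule sum.union_disjoint)

lemma pmf_sample:
  assumes nonneg: "\<forall>x y. 0 \<le> d x y" and "finite S" "finite C" "C \<noteq> {}" "cost d C S \<noteq> 0"
  shows "pmf (sample_pmf d S C) x = (if x \<in> S then (distC d C x)^2 / cost d C S else 0)"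
proof -
  let ?f = "\<lambda>x. if x \<in> S then (distC d C x)^2 / cost d C S else 0"
  have nn: "\<And>x. 0 \<le> ?f x" using cost_nonneg[of d C S] by auto
  have "(\<integral>\<^sup>+x. ennreal (?f x) \<partial>count_space UNIV) = (\<Sum>x\<in>S. ennreal (?f x))"
    using assms by (intro nn_integral_count_space') auto
  also have "\<dots> = ennreal (\<Sum>x\<in>S. ?f x)" by (rule sum_ennreal) (rule nn)
  also have "(\<Sum>x\<in>S. ?f x) = (\<Sum>x\<in>S. (distC d C x)^2) / cost d C S"
    by (simp add: sum_divide_distrib)
  also have "\<dots> = 1" using assms(5) by (simp add: cost_def)
  finally have "(\<integral>\<^sup>+x. ennreal (?f x) \<partial>count_space UNIV) = 1" by simp
  then show ?thesis unfolding sample_pmf_def using nn by (subst pmf_embed_pmf) auto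
qed

lemma set_sample:
  assumes nonneg: "\<forall>x y. 0 \<le> d x y" and "finite S" "finite C" "C \<noteq> {}" "cost d C S \<noteq> 0"
  shows "set_pmf (sample_pmf d S C) \<subseteq> S"
  using pmf_sample[OF assms] by (auto simp: set_pmf_eq)

lemma set_kpp:
  assumes nonneg: "\<forall>x y. 0 \<le> d x y" and "finite S" "finite C" "C \<noteq> {}"
  shows "set_pmf (kpp_pmf d S t C) \<subseteq> Pow (C \<union> S)"
  using assms(3,4)
proof (induction t arbitrary: C)
  case 0 then show ?case by auto
next
  case (Suc t)
  show ?case
  proof (cases "cost d C S = 0")
    case True then show ?thesis by auto
  next
    case False
    have "set_pmf (sample_pmf d S C) \<subseteq> S" using set_sample[OF nonneg assms(2) Suc.prems False] .
    moreover have "\<And>x. x \<in> S \<Longrightarrow> set_pmf (kpp_pmf d S t (insert x C)) \<subseteq> Pow (C \<union> S)"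
    proof -
      fix x assume "x \<in> S"
      have "set_pmf (kpp_pmf d S t (insert x C)) \<subseteq> Pow (insert x C \<union> S)"
        using Suc.IH[of "insert x C"] Suc.prems by auto
      then show "set_pmf (kpp_pmf d S t (insert x C)) \<subseteq> Pow (C \<union> S)" using \<open>x \<in> S\<close> by auto
    qed
    ultimately show ?thesis using False by auto
  qed
qed

lemma fin_kpp:
  assumes nonneg: "\<forall>x y. 0 \<le> d x y" and "finite S" "finite C" "C \<noteq> {}"
  shows "finite (set_pmf (kpp_pmf d S t C))"
  using set_kpp[OF assms] assms(2,3) by (meson finite_Pow_iff finite_UnI finite_subset)

lemma exp_step:
  assumes nonneg: "\<forall>x y. 0 \<le> d x y" and "finite S" "finite C" "C \<noteq> {}" "cost d C S \<noteq> 0"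
  shows "measure_pmf.expectation (kpp_pmf d S (Suc t) C) f =
     (\<Sum>x\<in>S. (distC d C x)^2 / cost d C S * measure_pmf.expectation (kpp_pmf d S t (insert x C)) f)"
proof -
  have "measure_pmf.expectation (kpp_pmf d S (Suc t) C) f =
     (\<Sum>x\<in>S. pmf (sample_pmf d S C) x *\<^sub>R measure_pmf.expectation (kpp_pmf d S t (insert x C)) f)"
  proof -
    have "kpp_pmf d S (Suc t) C = sample_pmf d S C \<bind> (\<lambda>x. kpp_pmf d S t (insert x C))"
      using assms(5) by simp
    then show ?thesis
      using assms by (simp only:, intro pmf_expectation_bind fin_kpp set_sample) auto
  qed
  then show ?thesis using pmf_sample[OF assms] by simp
qed


lemma sqb: fixes x M p q :: real
  assumes "0 \<le> x" "x \<le> M*(p+q)" "0 \<le> p" "0 \<le> q"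
  shows "x^2 \<le> 2*M^2*(p^2+q^2)"
proof -
  have "x^2 \<le> (M*(p+q))^2" using assms by (intro power_mono) auto
  also have "\<dots> = M^2*(p+q)^2" by (simp add: power_mult_distrib)
  also have "\<dots> \<le> M^2*(2*(p^2+q^2))"
  proof (intro mult_left_mono)
    have "0 \<le> (p-q)^2" by simp
    then show "(p+q)^2 \<le> 2*(p^2+q^2)" by (simp add: power2_eq_square algebra_simps)
  qed simp
  finally show ?thesis by (simp add: algebra_simps)
qed

lemma lem32:
  assumes sym: "\<forall>x y. d x y = d y x"
    and nonneg: "\<forall>x y. 0 \<le> d x y"
    and tri: "\<forall>x y z. d x z \<le> M * (d x y + d y z)"
    and finA: "finite A" and finC: "finite C" and neC: "C \<noteq> {}"
  shows "(\<Sum>a0\<in>A. (distC d C a0)^2 * cost d (insert a0 C) A)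
     \<le> 16 * M^4 * (\<Sum>x\<in>A. (d x c)^2) * cost d C A"
proof (cases "A = {}")
  case True then show ?thesis by (simp add: cost_def)
next
  case False
  define D where "D = distC d C"
  define phi where "phi = cost d C A"
  define sf where "sf = (\<lambda>a0. \<Sum>a\<in>A. (d a a0)^2)"
  define Ob where "Ob = (\<Sum>x\<in>A. (d x c)^2)"
  define n where "n = real (card A)"
  have npos: "n > 0" using False finA by (simp add: n_def card_gt_0_iff)
  have Dnn: "\<And>x. 0 \<le> D x" unfolding D_def using distC_nonneg[OF nonneg finC neC] by auto
  have h1: "(D a0)^2 \<le> 2*M^2*((d a a0)^2 + (D a)^2)" for a0 a
  proof -
    obtain c' where c': "c' \<in> C" "D a = d a c'" using distC_ex[OF finC neC] unfolding D_def by blast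
    have "D a0 \<le> d a0 c'" unfolding D_def using distC_le[OF finC c'(1)] .
    also have "\<dots> \<le> M * (d a0 a + d a c')" using tri by auto
    finally have "D a0 \<le> M * (d a a0 + D a)" using sym c' by simp
    then show ?thesis using sqb[of "D a0" M "d a a0" "D a"] Dnn nonneg by auto
  qed
  have h2: "n * (D a0)^2 \<le> 2*M^2*(sf a0 + phi)" for a0
  proof -
    have "n * (D a0)^2 = (\<Sum>a\<in>A. (D a0)^2)" by (simp add: n_def)
    also have "\<dots> \<le> (\<Sum>a\<in>A. 2*M^2*((d a a0)^2 + (D a)^2))" by (intro sum_mono h1)
    also have "\<dots> = 2*M^2*(sf a0 + phi)"
      by (simp add: sf_def phi_def cost_def D_def sum_distrib_left[symmetric] sum.distrib)
    finally show ?thesis .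
  qed
  have h3: "cost d (insert a0 C) A \<le> sf a0 \<and> cost d (insert a0 C) A \<le> phi" for a0
  proof -
    have m: "(distC d (insert a0 C) a)^2 \<le> (d a a0)^2 \<and> (distC d (insert a0 C) a)^2 \<le> (D a)^2" for a
      using distC_insert[OF finC neC, of d a0 a] Dnn[of a] nonneg unfolding D_def
      by (auto intro!: power_mono simp: min_def)
    show ?thesis unfolding sf_def phi_def cost_def D_def
      using m unfolding D_def by (auto intro!: sum_mono)
  qed
  have phinn: "0 \<le> phi" unfolding phi_def by (rule cost_nonneg)
  have snn: "0 \<le> sf a0" for a0 unfolding sf_def by (intro sum_nonneg) auto
  have h4: "n * ((D a0)^2 * cost d (insert a0 C) A) \<le> 4*M^2*phi * sf a0" for a0
  proof -
    let ?c = "cost d (insert a0 C) A"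
    have cn: "0 \<le> ?c" by (rule cost_nonneg)
    have "n * ((D a0)^2 * ?c) = (n * (D a0)^2) * ?c" by simp
    also have "\<dots> \<le> 2*M^2*(sf a0 + phi) * ?c" using h2 cn by (intro mult_right_mono) auto
    also have "\<dots> = 2*M^2*(sf a0 * ?c + phi * ?c)" by (simp add: algebra_simps)
    also have "\<dots> \<le> 2*M^2*(sf a0 * phi + phi * sf a0)"
      using h3[of a0] phinn snn[of a0]
      by (intro mult_left_mono add_mono mult_left_mono) auto
    finally show ?thesis by (simp add: algebra_simps)
  qed
  have h5: "(\<Sum>a0\<in>A. sf a0) \<le> 4*M^2*n*Ob"
  proof -
    have e: "(d a a0)^2 \<le> 2*M^2*((d a c)^2 + (d a0 c)^2)" for a a0
    proof -
      have "d a a0 \<le> M*(d a c + d c a0)" using tri by auto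
      then show ?thesis using sqb[of "d a a0" M "d a c" "d a0 c"] nonneg sym by auto
    qed
    have "(\<Sum>a0\<in>A. sf a0) \<le> (\<Sum>a0\<in>A. \<Sum>a\<in>A. 2*M^2*((d a c)^2 + (d a0 c)^2))"
      unfolding sf_def by (intro sum_mono e)
    also have "\<dots> = 4*M^2*n*Ob"
      by (simp add: sum.distrib sum_distrib_left Ob_def n_def algebra_simps sum_distrib_right[symmetric])
    finally show ?thesis .
  qed
  have "n * (\<Sum>a0\<in>A. (D a0)^2 * cost d (insert a0 C) A) \<le> (\<Sum>a0\<in>A. 4*M^2*phi * sf a0)"
    unfolding sum_distrib_left by (intro sum_mono h4)
  also have "\<dots> = 4*M^2*phi*(\<Sum>a0\<in>A. sf a0)" by (simp add: sum_distrib_left)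
  also have "\<dots> \<le> 4*M^2*phi*(4*M^2*n*Ob)" using h5 phinn by (intro mult_left_mono) auto
  also have "\<dots> = n * (16*M^4*Ob*phi)" by (simp add: algebra_simps power_def)
  finally have "n * (\<Sum>a0\<in>A. (D a0)^2 * cost d (insert a0 C) A) \<le> n * (16*M^4*Ob*phi)" .
  then show ?thesis using npos unfolding D_def Ob_def phi_def by simp
qed


lemma pdist: "p \<noteq> 0 \<Longrightarrow> p*(a/p*X + Y/p) = a*X + (Y::real)"
  by (simp add: field_simps)

lemma alg:
  fixes al H pc pu Q be u t :: real
  assumes u: "t + 1 \<le> u" "0 \<le> t" and pc: "0 \<le> pc" and pu: "0 \<le> pu" and pos: "0 < pc + pu"
    and al: "pc \<le> al" and be: "0 \<le> be" "be * (u - 1) = u - 1 - t"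
    and Q: "pu^2 \<le> u * Q"
  shows "(pc/(pc+pu))*(al*(1+H) + ((u-t)/u)*pu) + (pu*(al*(1+H)) + be*(pu^2 - Q))/(pc+pu)
     \<le> al*(1+H+1/(t+1)) + ((u-1-t)/u)*pu"
proof -
  define p where "p = pc + pu"
  have up: "u > 0" using u by simp
  have k1: "be*(pu^2 - Q) \<le> be*(pu^2 - pu^2/u)"
    using Q up be by (intro mult_left_mono) (auto simp: field_simps)
  have k2: "be*(pu^2 - pu^2/u) = (u-1-t)*pu^2/u"
  proof -
    have "be*(pu^2 - pu^2/u) = be*(u-1)*pu^2/u" using up by (simp add: field_simps)
    then show ?thesis using be by simp
  qed
  have k3: "pc*pu/u \<le> al*p/(t+1)"
  proof -
    have "pc*pu/u \<le> pc*p/u" using pc pu up by (intro divide_right_mono mult_left_mono) (auto simp: p_def)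
    also have "\<dots> \<le> pc*p/(t+1)" using u pc pu by (intro divide_left_mono mult_nonneg_nonneg) (auto simp: p_def)
    also have "\<dots> \<le> al*p/(t+1)" using al pc pu u by (intro divide_right_mono mult_right_mono) (auto simp: p_def)
    finally show ?thesis .
  qed
  have "p * (pc/p*(al*(1+H) + ((u-t)/u)*pu) + (pu*(al*(1+H)) + be*(pu^2 - Q))/p)
      = pc*(al*(1+H) + ((u-t)/u)*pu) + (pu*(al*(1+H)) + be*(pu^2 - Q))"
    using pos unfolding p_def[symmetric] by (intro pdist) simp
  also have "\<dots> = p*al*(1+H) + pc*((u-t)/u)*pu + be*(pu^2 - Q)"
    by (simp add: p_def algebra_simps)
  also have "\<dots> \<le> p*al*(1+H) + pc*((u-t)/u)*pu + (u-1-t)*pu^2/u" using k1 k2 by simp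
  also have "\<dots> = p*al*(1+H) + p*((u-1-t)/u)*pu + pc*pu/u"
    using up by (simp add: p_def field_simps power2_eq_square)
  also have "\<dots> \<le> p*al*(1+H) + p*((u-1-t)/u)*pu + p*(al/(t+1))" using k3 by (simp add: mult.commute)
  also have "\<dots> = p * (al*(1+H+1/(t+1)) + ((u-1-t)/u)*pu)" by (simp add: algebra_simps)
  finally show ?thesis using pos unfolding p_def by (simp add: mult_le_cancel_left)
qed


lemma main_gen:
  assumes sym: "\<forall>x y. d x y = d y x"
    and nonneg: "\<forall>x y. 0 \<le> d x y"
    and tri: "\<forall>x y z. d x z \<le> M * (d x y + d y z)"
    and finS: "finite S"
    and disj: "\<forall>A\<in>U. \<forall>B\<in>U. A \<noteq> B \<longrightarrow> A \<inter> B = {}"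
    and sub: "\<forall>A\<in>U. A \<subseteq> S"
    and ctr: "\<forall>A\<in>U. \<exists>c. \<forall>x\<in>A. d x c = distC d Copt x"
    and finC: "finite C" and neC: "C \<noteq> {}"
    and tle: "t \<le> card U"
  shows "measure_pmf.expectation (kpp_pmf d S t C) (\<lambda>C'. cost d C' S)
    \<le> (cost d C (S - \<Union>U) + 16 * M^4 * cost d Copt (\<Union>U)) * (1 + harm t)
       + (real (card U - t) / real (card U)) * cost d C (\<Union>U)"
  using disj sub ctr finC neC tle
proof (induction t arbitrary: C U)
  case 0
  have finU: "finite U" using 0 finS by (meson Pow_iff finite_Pow_iff finite_subset subsetI)
  have finUU: "finite (\<Union>U)" using 0 finS by (meson Sup_least finite_subset)
  have split: "cost d C S = cost d C (S - \<Union>U) + cost d C (\<Union>U)"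
  proof -
    have "S = (S - \<Union>U) \<union> \<Union>U" using 0 by auto
    then show ?thesis using cost_union[of "S - \<Union>U" "\<Union>U" d C] finS finUU
      by (metis Diff_disjoint finite_Diff inf_commute)
  qed
  have "cost d C (\<Union>U) \<le> (real (card U - 0) / real (card U)) * cost d C (\<Union>U)"
  proof (cases "card U = 0")
    case True then have "U = {}" using finU by simp
    then show ?thesis by (simp add: cost_def)
  qed simp
  moreover have "0 \<le> 16 * M^4 * cost d Copt (\<Union>U)"
    using cost_nonneg[of d Copt] by (simp add: zero_le_mult_iff)
  moreover have h0: "harm 0 = (0::real)" by (simp add: harm_def)
  moreover have e: "measure_pmf.expectation (kpp_pmf d S 0 C) (\<lambda>C'. cost d C' S) = cost d C S" by simp
  ultimately show ?case unfolding e h0 add_0_right mult_1_right using split by linarith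
next
  case (Suc t C U)
  have finU: "finite U" using Suc.prems finS by (meson Pow_iff finite_Pow_iff finite_subset subsetI)
  have finA: "\<And>A. A \<in> U \<Longrightarrow> finite A" using Suc.prems finS by (meson finite_subset)
  define Uu where "Uu = \<Union>U"
  define Sc where "Sc = S - Uu"
  have finUU: "finite Uu" unfolding Uu_def using Suc.prems finS by (meson Sup_least finite_subset)
  have finSc: "finite Sc" unfolding Sc_def using finS by simp
  have SUu: "S = Sc \<union> Uu" "Sc \<inter> Uu = {}" using Suc.prems unfolding Sc_def Uu_def by auto
  have split: "cost d C' S = cost d C' Sc + cost d C' Uu" for C'
    using cost_union[OF finSc finUU SUu(2)] SUu(1) by simp
  define u where "u = card U"
  have tu: "Suc t \<le> u" using Suc.prems u_def by simp
  define phi where "phi = cost d C S"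
  define pc where "pc = cost d C Sc"
  define pu where "pu = cost d C Uu"
  define Ou where "Ou = cost d Copt Uu"
  define al where "al = pc + 16 * M^4 * Ou"
  define H where "H = (harm t :: real)"
  have Hnn: "0 \<le> H" unfolding H_def by (rule harm_nonneg)
  have pcnn: "0 \<le> pc" "0 \<le> pu" "0 \<le> Ou" unfolding pc_def pu_def Ou_def by (rule cost_nonneg)+
  have M4: "0 \<le> 16 * M^4" by simp
  have alnn: "pc \<le> al" unfolding al_def using pcnn M4 by simp
  have hS: "harm (Suc t) = H + 1 / (real t + 1)" unfolding H_def by (simp add: harm_Suc inverse_eq_divide)
  have ut: "real (u - Suc t) = real u - 1 - real t" using tu by simp
  show ?case
  proof (cases "phi = 0")
    case True
    have "measure_pmf.expectation (kpp_pmf d S (Suc t) C) (\<lambda>C'. cost d C' S) = 0"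
      using True unfolding phi_def by simp
    moreover have "0 \<le> (cost d C (S - \<Union>U) + 16 * M^4 * cost d Copt (\<Union>U)) * (1 + harm (Suc t))
       + (real (card U - Suc t) / real (card U)) * cost d C (\<Union>U)"
      using pcnn Hnn hS M4 unfolding pc_def pu_def Ou_def Sc_def Uu_def
      by (intro add_nonneg_nonneg mult_nonneg_nonneg divide_nonneg_nonneg) auto
    ultimately show ?thesis by simp
  next
    case False
    have phipos: "0 < phi" using False cost_nonneg[of d C S] unfolding phi_def by simp
    define F where "F = (\<lambda>x. measure_pmf.expectation (kpp_pmf d S t (insert x C)) (\<lambda>C'. cost d C' S))"
    define w where "w = (\<lambda>x. (distC d C x)^2 / phi)"
    have wnn: "0 \<le> w x" for x unfolding w_def using phipos by simp
    have wsum: "(\<Sum>x\<in>Y. w x) = cost d C Y / phi" for Y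
      unfolding w_def cost_def by (simp add: sum_divide_distrib)
    have E: "measure_pmf.expectation (kpp_pmf d S (Suc t) C) (\<lambda>C'. cost d C' S) = (\<Sum>x\<in>S. w x * F x)"
      unfolding w_def F_def phi_def using exp_step[OF nonneg finS Suc.prems(4,5)] False phi_def by simp
    have Fc: "F x \<le> al*(1+H) + ((real u - real t)/real u)*pu" if "x \<in> Sc" for x
    proof -
      have "F x \<le> (cost d (insert x C) (S - \<Union>U) + 16 * M^4 * cost d Copt (\<Union>U)) * (1 + harm t)
       + (real (card U - t) / real (card U)) * cost d (insert x C) (\<Union>U)"
        unfolding F_def using Suc.prems by (intro Suc.IH) auto
      also have "\<dots> = (cost d (insert x C) Sc + 16 * M^4 * Ou) * (1+H)
         + ((real u - real t)/real u) * cost d (insert x C) Uu"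
        unfolding Ou_def Uu_def Sc_def H_def u_def using tu u_def by (simp add: of_nat_diff)
      also have "\<dots> \<le> al*(1+H) + ((real u - real t)/real u)*pu"
        unfolding al_def pc_def pu_def
        using cost_insert_le[OF nonneg Suc.prems(4,5), of x] Hnn tu
        by (intro add_mono mult_right_mono mult_left_mono) auto
      finally show ?thesis .
    qed
    define be where "be = real (u - 1 - t) / real (u - 1)"
    have benn: "0 \<le> be" unfolding be_def by simp
    have FA: "F x \<le> (pc + 16 * M^4 * (Ou - cost d Copt A)) * (1+H) + be * (pu - cost d C A)
                + cost d (insert x C) A * (1+H)" if A: "A \<in> U" and x: "x \<in> A" for A x
    proof -
      let ?U = "U - {A}"
      have cU: "card ?U = u - 1" using A finU u_def by simp
      have AUu: "A \<subseteq> Uu" using A unfolding Uu_def by blast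
      have e1: "S - \<Union>?U = Sc \<union> A" using Suc.prems(1,2) A unfolding Sc_def Uu_def by auto
      have e1': "S - (Uu - A) = Sc \<union> A" using AUu Suc.prems(2) A unfolding Sc_def by blast
      have e2: "\<Union>?U = Uu - A" using Suc.prems(1,2) A unfolding Uu_def by auto
      have d1: "Sc \<inter> A = {}" using A unfolding Sc_def Uu_def by blast
      have finUA: "finite (Uu - A)" using finUU by simp
      have u2: "Uu = (Uu - A) \<union> A" using AUu by blast
      have cu: "cost d C' Uu = cost d C' (Uu - A) + cost d C' A" for C'
        using cost_union[OF finUA finA[OF A], of d C'] u2 by (metis Diff_disjoint inf_commute)
      have "F x \<le> (cost d (insert x C) (S - \<Union>?U) + 16 * M^4 * cost d Copt (\<Union>?U)) * (1 + harm t)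
       + (real (card ?U - t) / real (card ?U)) * cost d (insert x C) (\<Union>?U)"
        unfolding F_def using Suc.prems tu cU by (intro Suc.IH) auto
      also have "\<dots> = (cost d (insert x C) Sc + cost d (insert x C) A + 16 * M^4 * (Ou - cost d Copt A)) * (1+H)
         + be * cost d (insert x C) (Uu - A)"
        unfolding e2 e1' cU be_def H_def Ou_def
        using cost_union[OF finSc finA[OF A] d1, of d "insert x C"] cu[of Copt] by simp
      also have "\<dots> \<le> (pc + cost d (insert x C) A + 16 * M^4 * (Ou - cost d Copt A)) * (1+H)
         + be * (pu - cost d C A)"
        unfolding pc_def pu_def cu[of C]
        using cost_insert_le[OF nonneg Suc.prems(4,5), of x] Hnn benn
        by (intro add_mono mult_right_mono mult_left_mono) auto
      also have "\<dots> = (pc + 16 * M^4 * (Ou - cost d Copt A)) * (1+H) + be * (pu - cost d C A)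
                + cost d (insert x C) A * (1+H)" by (simp add: algebra_simps)
      finally show ?thesis .
    qed
    have SA: "(\<Sum>x\<in>A. w x * F x) \<le> (cost d C A / phi) * (al*(1+H) + be*(pu - cost d C A))"
      if A: "A \<in> U" for A
    proof -
      define K where "K = (pc + 16 * M^4 * (Ou - cost d Copt A)) * (1+H) + be * (pu - cost d C A)"
      obtain c where c: "\<forall>x\<in>A. d x c = distC d Copt x" using Suc.prems(3) A by blast
      have OA: "cost d Copt A = (\<Sum>x\<in>A. (d x c)^2)" unfolding cost_def using c by simp
      have "(\<Sum>x\<in>A. w x * F x) \<le> (\<Sum>x\<in>A. w x * K + (1+H)/phi * ((distC d C x)^2 * cost d (insert x C) A))"
      proof (intro sum_mono)
        fix x assume x: "x \<in> A"
        have "w x * F x \<le> w x * (K + cost d (insert x C) A * (1+H))"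
          using FA[OF A x] wnn[of x] unfolding K_def by (intro mult_left_mono) auto
        also have "\<dots> = w x * K + (1+H)/phi * ((distC d C x)^2 * cost d (insert x C) A)"
          unfolding w_def by (simp add: algebra_simps add_divide_distrib)
        finally show "w x * F x \<le> w x * K + (1+H)/phi * ((distC d C x)^2 * cost d (insert x C) A)" .
      qed
      also have "\<dots> = (cost d C A / phi) * K + (1+H)/phi * (\<Sum>x\<in>A. (distC d C x)^2 * cost d (insert x C) A)"
        by (simp add: sum.distrib sum_distrib_left[symmetric] sum_distrib_right[symmetric] wsum sum_divide_distrib[symmetric])
      also have "\<dots> \<le> (cost d C A / phi) * K + (1+H)/phi * (16 * M^4 * cost d Copt A * cost d C A)"
        unfolding OA using Hnn phipos
        by (intro add_left_mono mult_left_mono lem32[OF sym nonneg tri finA[OF A] Suc.prems(4,5)]) auto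
      also have "\<dots> = (cost d C A / phi) * (al*(1+H) + be*(pu - cost d C A))"
        unfolding K_def al_def by (simp add: algebra_simps add_divide_distrib)
      finally show ?thesis .
    qed
    have Scpart: "(\<Sum>x\<in>Sc. w x * F x) \<le> (pc/phi) * (al*(1+H) + ((real u - real t)/real u)*pu)"
    proof -
      have "(\<Sum>x\<in>Sc. w x * F x) \<le> (\<Sum>x\<in>Sc. w x * (al*(1+H) + ((real u - real t)/real u)*pu))"
        using Fc wnn by (intro sum_mono mult_left_mono) auto
      also have "\<dots> = (pc/phi) * (al*(1+H) + ((real u - real t)/real u)*pu)"
        by (simp add: sum_distrib_right[symmetric] wsum pc_def)
      finally show ?thesis .
    qed
    have disjU: "\<forall>A\<in>U. \<forall>B\<in>U. A \<noteq> B \<longrightarrow> A \<inter> B = {}" using Suc.prems(1) .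
    have finAll: "\<forall>A\<in>U. finite A" using finA by blast
    have Upart: "(\<Sum>x\<in>Uu. w x * F x) = (\<Sum>A\<in>U. \<Sum>x\<in>A. w x * F x)"
      unfolding Uu_def using sum.Union_disjoint[OF finAll disjU] by (simp add: o_def)
    have pusum: "pu = (\<Sum>A\<in>U. cost d C A)"
      unfolding pu_def Uu_def cost_def using sum.Union_disjoint[OF finAll disjU] by (simp add: o_def)
    define Q where "Q = (\<Sum>A\<in>U. (cost d C A)^2)"
    have Qb: "pu^2 \<le> real u * Q"
      unfolding pusum Q_def u_def using sum_squared_le_sum_of_squares[of "\<lambda>A. cost d C A" U]
      by (simp add: mult.commute)
    have Usum: "(\<Sum>A\<in>U. (cost d C A / phi) * (al*(1+H) + be*(pu - cost d C A)))
        = (pu*(al*(1+H)) + be*(pu^2 - Q))/phi"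
    proof -
      have "(\<Sum>A\<in>U. (cost d C A / phi) * (al*(1+H) + be*(pu - cost d C A)))
         = (\<Sum>A\<in>U. cost d C A * (al*(1+H) + be*pu) - be * (cost d C A)^2) / phi"
        unfolding sum_divide_distrib
      proof (rule sum.cong)
        fix A
        show "cost d C A / phi * (al * (1 + H) + be * (pu - cost d C A)) =
          (cost d C A * (al * (1 + H) + be * pu) - be * (cost d C A)\<^sup>2) / phi"
          using phipos by (simp add: field_simps power2_eq_square)
      qed simp
      also have "\<dots> = ((\<Sum>A\<in>U. cost d C A) * (al*(1+H) + be*pu) - be * Q) / phi"
        by (simp add: sum_subtractf sum_distrib_right sum_distrib_left Q_def)
      also have "\<dots> = (pu*(al*(1+H)) + be*(pu^2 - Q))/phi"
        unfolding pusum[symmetric] by (simp add: algebra_simps power2_eq_square)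
      finally show ?thesis .
    qed
    have phisplit: "phi = pc + pu" unfolding phi_def pc_def pu_def by (rule split)
    have bee: "be * (real u - 1) = real u - 1 - real t"
    proof (cases "u = 1")
      case True then have "t = 0" using tu by simp
      then show ?thesis using True unfolding be_def by simp
    next
      case False then have "u > 1" using tu by simp
      then show ?thesis unfolding be_def using tu by (simp add: of_nat_diff)
    qed
    have "measure_pmf.expectation (kpp_pmf d S (Suc t) C) (\<lambda>C'. cost d C' S)
        = (\<Sum>x\<in>Sc. w x * F x) + (\<Sum>x\<in>Uu. w x * F x)"
      unfolding E using sum.union_disjoint[OF finSc finUU SUu(2)] SUu(1) by simp
    also have "\<dots> \<le> (pc/phi) * (al*(1+H) + ((real u - real t)/real u)*pu)
        + (\<Sum>A\<in>U. (cost d C A / phi) * (al*(1+H) + be*(pu - cost d C A)))"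
      unfolding Upart using Scpart SA by (intro add_mono sum_mono) auto
    also have "\<dots> = (pc/(pc+pu)) * (al*(1+H) + ((real u - real t)/real u)*pu)
        + (pu*(al*(1+H)) + be*(pu^2 - Q))/(pc+pu)"
      by (simp only: Usum, simp only: phisplit)
    also have "\<dots> \<le> al*(1+H+1/(real t+1)) + ((real u-1-real t)/real u)*pu"
      using tu pcnn phipos phisplit alnn benn bee Qb by (intro alg) auto
    also have "\<dots> = (cost d C (S - \<Union>U) + 16 * M^4 * cost d Copt (\<Union>U)) * (1 + harm (Suc t))
       + (real (card U - Suc t) / real (card U)) * cost d C (\<Union>U)"
      unfolding hS ut[folded u_def] al_def pc_def Ou_def Sc_def Uu_def pu_def u_def[symmetric]
      by (simp add: algebra_simps)
    finally show ?thesis .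
  qed
qed

theorem lemma4:
  fixes d :: "'a \<Rightarrow> 'a \<Rightarrow> real" and M :: real
    and S Copt C :: "'a set" and a :: "'a \<Rightarrow> 'a"
    and K u t :: nat and U :: "'a set set"
  assumes sym: "\<forall>x y. d x y = d y x"
    and nonneg: "\<forall>x y. 0 \<le> d x y"
    and approx_tri: "\<forall>x y z. d x z \<le> M * (d x y + d y z)"
    and finS: "finite S"
    and finOpt: "finite Copt" and cardOpt: "card Copt = K" and neOpt: "Copt \<noteq> {}"
    and opt: "\<forall>C'. finite C' \<and> card C' = K \<longrightarrow> cost d Copt S \<le> cost d C' S"
    and assign: "\<forall>x\<in>S. a x \<in> Copt \<and> d x (a x) = distC d Copt x"
    and finC: "finite C" and neC: "C \<noteq> {}"
    and U_clusters: "U \<subseteq> clusters S Copt a"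
    and U_uncovered: "\<forall>A\<in>U. A \<inter> C = {}"
    and cardU: "card U = u" and u_pos: "u > 0"
    and t_le: "t \<le> u"
  shows "measure_pmf.expectation (kpp_pmf d S t C) (\<lambda>C'. cost d C' S)
    \<le> (cost d C (S - \<Union>U) + 16 * M^4 * cost d Copt (\<Union>U)) * (1 + harm t)
       + (real (u - t) / real u) * cost d C (\<Union>U)"
proof -
  have cl: "\<exists>c. A = {x\<in>S. a x = c}" if "A \<in> U" for A
    using U_clusters that unfolding clusters_def by auto
  have disj: "\<forall>A\<in>U. \<forall>B\<in>U. A \<noteq> B \<longrightarrow> A \<inter> B = {}"
  proof (intro ballI impI)
    fix A B assume "A \<in> U" "B \<in> U" "A \<noteq> B"
    then obtain c c' where "A = {x\<in>S. a x = c}" "B = {x\<in>S. a x = c'}" using cl by metis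
    then show "A \<inter> B = {}" using \<open>A \<noteq> B\<close> by auto
  qed
  have sub: "\<forall>A\<in>U. A \<subseteq> S" using cl by fastforce
  have ctr: "\<forall>A\<in>U. \<exists>c. \<forall>x\<in>A. d x c = distC d Copt x"
  proof
    fix A assume "A \<in> U"
    then obtain c where "A = {x\<in>S. a x = c}" using cl by blast
    then show "\<exists>c. \<forall>x\<in>A. d x c = distC d Copt x" using assign by (intro exI[of _ c]) auto
  qed
  have "t \<le> card U" using t_le cardU by simp
  from main_gen[OF sym nonneg approx_tri finS disj sub ctr finC neC this]
  show ?thesis unfolding cardU .
qed

end
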